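(* Let \(a,b,c\) be positive integers, \(m\) a positive integer that is not a perfect square, with \(\gcd(am,b^2-c^2m)=1\), and let \(A,B\in\mathbb Z\). Then there is a unique \((\bar x,\bar y,\bar z,\bar w)\in\mathbb Z^4\) with \(0\leq\bar z<am\) and \(0\leq\bar w<a\) satisfying \(a\sqrt m(\bar x+\bar y\sqrt m)+(b+c\sqrt m)(\bar z+\bar w\sqrt m)=A+B\sqrt m\). *)

theory Defs
  imports Complex_Main
begin

end

theory Submission
  imports Defs
begin

lemma sq_lemma:
  fixes m P Q :: int
  assumes ns: "\<not> (\<exists>k::int. m = k ^ 2)" and m: "m > 0"
    and eq: "of_int P + of_int Q * sqrt (of_int m) = 0"
  shows "P = 0 \<and> Q = 0"
proof -
  have ss: "sqrt (of_int m) * sqrt (of_int m) = (of_int m::real)" using m by simp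
  have Q0: "Q = 0"
  proof (rule ccontr)
    assume Q: "Q \<noteq> 0"
    have "of_int Q * sqrt (of_int m) = - (of_int P::real)" using eq by linarith
    hence "(of_int Q * sqrt (of_int m)) * (of_int Q * sqrt (of_int m)) = (of_int P::real) * of_int P" by simp
    moreover have "(of_int Q * sqrt (of_int m)) * (of_int Q * sqrt (of_int m)) = (of_int Q * of_int Q) * (sqrt (of_int m) * sqrt (of_int m)::real)"
      by (simp only: ac_simps)
    ultimately have "of_int (Q * Q * m) = (of_int (P * P) :: real)" unfolding ss by simp
    hence "Q * Q * m = P * P" by (simp only: of_int_eq_iff)
    hence e: "Q^2 * m = P^2" by (simp add: power2_eq_square)
    hence "Q^2 dvd P^2" by (metis dvd_triv_left)
    hence "Q dvd P" by simp
    then obtain t where "P = Q * t" by (elim dvdE)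
    with e Q have "m = t^2" by (simp add: power_mult_distrib)
    with ns show False by blast
  qed
  with eq show ?thesis by simp
qed

lemma real_ident:
  fixes a x y b c z w s M A B :: real
  assumes "s * s = M"
  shows "a * s * (x + y * s) + (b + c * s) * (z + w * s) - (A + B * s)
    = (a*M*y + b*z + c*M*w - A) + (a*x + c*z + b*w - B) * s"
  unfolding assms[symmetric] by algebra

lemma eq_iff:
  fixes a b c m A B x y z w :: int
  assumes ns: "\<not> (\<exists>k::int. m = k ^ 2)" and m: "m > 0"
  shows "(of_int a * sqrt (of_int m) * (of_int x + of_int y * sqrt (of_int m))
    + (of_int b + of_int c * sqrt (of_int m)) * (of_int z + of_int w * sqrt (of_int m))
    = of_int A + of_int B * sqrt (of_int m)) \<longleftrightarrow>
    (a*m*y + b*z + c*m*w = A \<and> a*x + c*z + b*w = B)"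
proof -
  have ss: "sqrt (of_int m) * sqrt (of_int m) = (of_int m::real)" using m by simp
  define P where "P = a*m*y + b*z + c*m*w - A"
  define Q where "Q = a*x + c*z + b*w - B"
  have d: "of_int a * sqrt (of_int m) * (of_int x + of_int y * sqrt (of_int m))
    + (of_int b + of_int c * sqrt (of_int m)) * (of_int z + of_int w * sqrt (of_int m))
    - (of_int A + of_int B * sqrt (of_int m)) =
    of_int P + of_int Q * sqrt (of_int m)"
    unfolding real_ident[OF ss] P_def Q_def by simp
  have "(of_int a * sqrt (of_int m) * (of_int x + of_int y * sqrt (of_int m))
    + (of_int b + of_int c * sqrt (of_int m)) * (of_int z + of_int w * sqrt (of_int m))
    = of_int A + of_int B * sqrt (of_int m)) \<longleftrightarrow> (of_int P + of_int Q * sqrt (of_int m) = (0::real))"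
    using d by linarith
  also have "\<dots> \<longleftrightarrow> P = 0 \<and> Q = 0" using sq_lemma[OF ns m, of P Q] by auto
  also have "\<dots> \<longleftrightarrow> (a*m*y + b*z + c*m*w = A \<and> a*x + c*z + b*w = B)" unfolding P_def Q_def by linarith
  finally show ?thesis .
qed
lemma small_dvd:
  fixes n d :: int
  assumes "n > 0" "n dvd d" "\<bar>d\<bar> < n"
  shows "d = 0"
proof (rule ccontr)
  assume "d \<noteq> 0"
  hence "\<bar>n\<bar> \<le> \<bar>d\<bar>" using dvd_imp_le_int assms(2) by blast
  thus False using assms(1,3) by linarith
qed

lemma uniq:
  fixes a b c m A B x y z w x' y' z' w' :: int
  assumes a: "a > 0" and m: "m > 0"
    and g: "gcd (a * m) (b ^ 2 - c ^ 2 * m) = 1"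
    and z: "0 \<le> z" "z < a * m" and w: "0 \<le> w" "w < a"
    and z': "0 \<le> z'" "z' < a * m" and w': "0 \<le> w'" "w' < a"
    and e1: "a*m*y + b*z + c*m*w = A" and e2: "a*x + c*z + b*w = B"
    and e1': "a*m*y' + b*z' + c*m*w' = A" and e2': "a*x' + c*z' + b*w' = B"
  shows "x = x' \<and> y = y' \<and> z = z' \<and> w = w'"
proof -
  define D where "D = b ^ 2 - c ^ 2 * m"
  have cop: "coprime (a*m) D" using g unfolding D_def by (simp only: coprime_iff_gcd_eq_1)
  hence copa: "coprime a D" by simp
  have i1: "b*(z-z') + c*m*(w-w') - a*m*(y'-y) = (a*m*y + b*z + c*m*w) - (a*m*y' + b*z' + c*m*w')" by algebra
  have h1: "b*(z-z') + c*m*(w-w') = a*m*(y'-y)" using i1 e1 e1' by linarith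
  have i2: "c*(z-z') + b*(w-w') - a*(x'-x) = (a*x + c*z + b*w) - (a*x' + c*z' + b*w')" by algebra
  have h2: "c*(z-z') + b*(w-w') = a*(x'-x)" using i2 e2 e2' by linarith
  have i3: "D*(z-z') = b*(b*(z-z') + c*m*(w-w')) - c*m*(c*(z-z') + b*(w-w'))" unfolding D_def by algebra
  have "D*(z-z') = a*m*(b*(y'-y) - c*(x'-x))" unfolding i3 h1 h2 by algebra
  hence "a*m dvd D*(z-z')" by simp
  hence "a*m dvd (z-z')" using cop by (simp add: coprime_dvd_mult_right_iff)
  moreover have "\<bar>z-z'\<bar> < a*m" using z z' by linarith
  ultimately have dz: "z - z' = 0" using small_dvd[of "a*m" "z - z'"] a m by simp
  have "m*(c*(w-w')) = m*(a*(y'-y))" using h1 dz by (simp add: ac_simps)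
  hence h3: "c*(w-w') = a*(y'-y)" using m by simp
  have h4: "b*(w-w') = a*(x'-x)" using h2 dz by simp
  have i4: "D*(w-w') = b*(b*(w-w')) - c*m*(c*(w-w'))" unfolding D_def by algebra
  have "D*(w-w') = a*(b*(x'-x) - c*m*(y'-y))" unfolding i4 h3 h4 by algebra
  hence "a dvd D*(w-w')" by simp
  hence "a dvd (w-w')" using copa by (simp add: coprime_dvd_mult_right_iff)
  moreover have "\<bar>w-w'\<bar> < a" using w w' by linarith
  ultimately have dw: "w - w' = 0" using small_dvd[of a "w - w'"] a by simp
  have "a*(y'-y) = 0" using h3 dw by simp
  hence "y = y'" using a by simp
  moreover have "a*(x'-x) = 0" using h4 dw by simp
  hence "x = x'" using a by simp
  ultimately show ?thesis using dz dw by simp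
qed

lemma exist:
  fixes a b c m A B :: int
  assumes a: "a > 0" and m: "m > 0"
    and g: "gcd (a * m) (b ^ 2 - c ^ 2 * m) = 1"
  shows "\<exists>x y z w. 0 \<le> z \<and> z < a * m \<and> 0 \<le> w \<and> w < a \<and>
     a*m*y + b*z + c*m*w = A \<and> a*x + c*z + b*w = B"
proof -
  obtain u v where uv: "u * (a*m) + v * (b ^ 2 - c ^ 2 * m) = 1" using bezout_int g by metis
  define z0 where "z0 = v*(b*A - c*m*B)"
  define w0 where "w0 = v*(b*B - c*A)"
  define z where "z = z0 mod (a*m)"
  define w where "w = w0 mod a"
  define k where "k = z0 div (a*m)"
  define l where "l = w0 div a"
  define y where "y = u*A + b*k + c*l"
  define x where "x = u*m*B + c*m*k + b*l"
  have zk: "z0 = a*m*k + z" unfolding z_def k_def by simp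
  have wl: "w0 = a*l + w" unfolding w_def l_def by simp
  have am: "a*m > 0" using a m by simp
  have "0 \<le> z" "z < a*m" unfolding z_def using am by simp_all
  moreover have "0 \<le> w" "w < a" unfolding w_def using a by simp_all
  moreover have "a*m*y + b*z + c*m*w = A"
    using zk wl uv unfolding y_def z0_def w0_def by algebra
  moreover have "a*x + c*z + b*w = B"
    using zk wl uv unfolding x_def z0_def w0_def by algebra
  ultimately show ?thesis by blast
qed

theorem corollary2:
  fixes a b c m A B :: int
  assumes "a > 0" and "b > 0" and "c > 0" and "m > 0"
    and "\<not> (\<exists>k::int. m = k ^ 2)"
    and "gcd (a * m) (b ^ 2 - c ^ 2 * m) = 1"
  shows "\<exists>!(x, y, z, w). (0::int) \<le> z \<and> z < a * m \<and> 0 \<le> w \<and> w < a \<and>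
    of_int a * sqrt (of_int m) * (of_int x + of_int y * sqrt (of_int m))
    + (of_int b + of_int c * sqrt (of_int m)) * (of_int z + of_int w * sqrt (of_int m))
    = of_int A + of_int B * sqrt (of_int m)"
proof -
  note E = eq_iff[OF assms(5) assms(4)]
  obtain x y z w where s: "0 \<le> z \<and> z < a * m \<and> 0 \<le> w \<and> w < a \<and>
     a*m*y + b*z + c*m*w = A \<and> a*x + c*z + b*w = B"
    using exist[OF assms(1) assms(4) assms(6)] by blast
  show ?thesis
  proof (rule ex1I[where a="(x,y,z,w)"])
    show "case (x,y,z,w) of (x, y, z, w) \<Rightarrow> (0::int) \<le> z \<and> z < a * m \<and> 0 \<le> w \<and> w < a \<and>
    of_int a * sqrt (of_int m) * (of_int x + of_int y * sqrt (of_int m))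
    + (of_int b + of_int c * sqrt (of_int m)) * (of_int z + of_int w * sqrt (of_int m))
    = of_int A + of_int B * sqrt (of_int m)" using s E by simp
  next
    fix p
    assume p: "case p of (x, y, z, w) \<Rightarrow> (0::int) \<le> z \<and> z < a * m \<and> 0 \<le> w \<and> w < a \<and>
    of_int a * sqrt (of_int m) * (of_int x + of_int y * sqrt (of_int m))
    + (of_int b + of_int c * sqrt (of_int m)) * (of_int z + of_int w * sqrt (of_int m))
    = of_int A + of_int B * sqrt (of_int m)"
    obtain x' y' z' w' where pe: "p = (x',y',z',w')" by (cases p) auto
    with p E have s': "0 \<le> z' \<and> z' < a * m \<and> 0 \<le> w' \<and> w' < a \<and>
     a*m*y' + b*z' + c*m*w' = A \<and> a*x' + c*z' + b*w' = B" by simp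
    have "x' = x \<and> y' = y \<and> z' = z \<and> w' = w"
      using uniq[OF assms(1) assms(4) assms(6), where x=x and y=y and z=z and w=w and x'=x' and y'=y' and z'=z' and w'=w' and A=A and B=B] s s' by auto
    then show "p = (x,y,z,w)" using pe by simp
  qed
qed

end
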